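(* Let $\mathcal{P}=(\mathcal{P},m,\Delta,\delta)$ be a double twisted bialgebra and $\mathcal{Q}$ a species. The formula $\phi\leftarrow f=(\phi\otimes f)\circ\delta$ (i.e. $(\phi\leftarrow f)[A](x)=\sum f[A](x'')\phi[A](x')$ where $\delta_A(x)=\sum x'\otimes x''$) defines a right action of the monoid $M_{\mathcal{P}}=(\mathrm{Char}(\mathcal{P}),\star)$ on the set $\mathrm{Mor}(\mathcal{P},\mathcal{Q})$ of species morphisms $\mathcal{P}\to\mathcal{Q}$; in particular $(\phi\leftarrow f)\leftarrow g=\phi\leftarrow(f\star g)$. Moreover: (1) if $\mathcal{Q}$ is a twisted algebra, the set $\mathrm{Mor}_A(\mathcal{P},\mathcal{Q})$ of twisted algebra morphisms is stable under this action; (2) if $\mathcal{Q}$ is a twisted coalgebra, the set $\mathrm{Mor}_C(\mathcal{P},\mathcal{Q})$ of twisted coalgebra morphisms is stable under this action; (3) if $\mathcal{Q}$ is a twisted bialgebra, the set $\mathrm{Mor}_B(\mathcal{P},\mathcal{Q})$ of twisted bialgebra morphisms is stable under this action.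
   Context: Work over a field $\mathbb{K}$. Species, twisted algebras (natural associative $m_{A,B}:\mathcal{P}[A]\otimes\mathcal{P}[B]\to\mathcal{P}[A\sqcup B]$ with unit $1_{\mathcal{P}}$), twisted coalgebras (natural coassociative $\Delta_{A,B}:\mathcal{P}[A\sqcup B]\to\mathcal{P}[A]\otimes\mathcal{P}[B]$ with counit $\varepsilon$) and twisted bialgebras are taken in the category of species with the Cauchy product; morphisms are natural families of linear maps compatible with the structures. A double twisted bialgebra is $(\mathcal{P},m,\Delta,\delta)$ with: (i) $(\mathcal{P},m,\Delta)$ a twisted bialgebra with counit $\varepsilon$; (ii) for each finite set $A$ a coassociative coproduct $\delta_A:\mathcal{P}[A]\to\mathcal{P}[A]\otimes\mathcal{P}[A]$ with counit $\varepsilon'_A$, natural in bijections; (iii) $\delta$ multiplicative ($\delta(xy)=\sum x'y'\otimes x''y''$, $\delta_\emptyset(1)=1\otimes1$); (iv) $(\Delta_{A,B}\otimes Id)\circ\delta_{A\sqcup B}=m_{1,3,24}\circ(\delta_A\otimes\delta_B)\circ\Delta_{A,B}$ with $m_{1,3,24}(x\otimes y\otimes z\otimes t)=x\otimes z\otimes m_{A,B}(y\otimes t)$; (v) $(\varepsilon\otimes Id)\delta_\emptyset(x)=\varepsilon(x)1_{\mathcal{P}}$ for $x\in\mathcal{P}[\emptyset]$. $\mathrm{Char}(\mathcal{P})$ is the set of characters: natural families of linear forms $f[A]:\mathcal{P}[A]\to\mathbb{K}$ with $f(xy)=f(x)f(y)$ and $f(1_{\mathcal{P}})=1$. The product $\star$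 is $(f\star g)(x)=\sum f(x')g(x'')$ where $\delta_A(x)=\sum x'\otimes x''$; $(\mathrm{Char}(\mathcal{P}),\star)$ is a monoid with unit $\varepsilon'$. *)

theory Defs
  imports Complex_Main
begin

text \<open>A species is given by an ambient K-vector space (type 'p with scalar
multiplication scl), a subspace sp A for every finite set A of labels
(this is P[A]), and relabelling maps rl s A : P[A] -> P[s`A] for every
s injective on A (this is P[s] for the bijection s : A -> s`A).\<close>

record ('k, 'l, 'p) spec =
  scl :: "'k \<Rightarrow> 'p \<Rightarrow> 'p"
  sp  :: "'l set \<Rightarrow> 'p set"
  rl  :: "('l \<Rightarrow> 'l) \<Rightarrow> 'l set \<Rightarrow> 'p \<Rightarrow> 'p"

definition lin_map :: "('k \<Rightarrow> 'p::ab_group_add \<Rightarrow> 'p) \<Rightarrow> 'p set \<Rightarrow> ('k \<Rightarrow> 'q::ab_group_add \<Rightarrow> 'q) \<Rightarrow> ('p \<Rightarrow> 'q) \<Rightarrow> bool"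
  where "lin_map s1 V s2 f \<longleftrightarrow>
    (\<forall>x\<in>V. \<forall>y\<in>V. f (x + y) = f x + f y) \<and> (\<forall>c. \<forall>x\<in>V. f (s1 c x) = s2 c (f x))"

definition lin_form :: "('k::field \<Rightarrow> 'p::ab_group_add \<Rightarrow> 'p) \<Rightarrow> 'p set \<Rightarrow> ('p \<Rightarrow> 'k) \<Rightarrow> bool"
  where "lin_form s V f \<longleftrightarrow>
    (\<forall>x\<in>V. \<forall>y\<in>V. f (x + y) = f x + f y) \<and> (\<forall>c. \<forall>x\<in>V. f (s c x) = c * f x)"

definition species :: "('k::field, 'l, 'p::ab_group_add) spec \<Rightarrow> bool" where
  "species P \<longleftrightarrow> vector_space (scl P) \<and>
    (\<forall>A. finite A \<longrightarrow> module.subspace (scl P) (sp P A)) \<and>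
    (\<forall>A s. finite A \<and> inj_on s A \<longrightarrow>
        (\<forall>x\<in>sp P A. rl P s A x \<in> sp P (s ` A)) \<and> lin_map (scl P) (sp P A) (scl P) (rl P s A)) \<and>
    (\<forall>A. \<forall>x\<in>sp P A. finite A \<longrightarrow> rl P id A x = x) \<and>
    (\<forall>A s t. \<forall>x\<in>sp P A. finite A \<and> inj_on s A \<and> inj_on t (s ` A) \<longrightarrow>
        rl P (t \<circ> s) A x = rl P t (s ` A) (rl P s A x)) \<and>
    (\<forall>A s s'. \<forall>x\<in>sp P A. finite A \<and> (\<forall>a\<in>A. s a = s' a) \<longrightarrow> rl P s A x = rl P s' A x)"

text \<open>An element of V (x) W (resp. U (x) V (x) W) is represented by a finite
formal sum of pure tensors, i.e. a list of pairs (triples). Two such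
representatives denote the same tensor iff all their entries lie in the
respective spaces and they agree under every functional
lambda (x) mu (resp. lambda (x) mu (x) nu), lambda, mu, nu linear forms; over a
field this is exactly equality in the tensor product.\<close>

definition tens_eq :: "('k::field \<Rightarrow> 'p::ab_group_add \<Rightarrow> 'p) \<Rightarrow> 'p set \<Rightarrow> 'p set
     \<Rightarrow> ('p \<times> 'p) list \<Rightarrow> ('p \<times> 'p) list \<Rightarrow> bool" where
  "tens_eq s V W t u \<longleftrightarrow> set t \<subseteq> V \<times> W \<and> set u \<subseteq> V \<times> W \<and>
    (\<forall>l m. lin_form s V l \<and> lin_form s W m \<longrightarrow>
       (\<Sum>(a,b)\<leftarrow>t. l a * m b) = (\<Sum>(a,b)\<leftarrow>u. l a * m b))"

definition tens3_eq :: "('k::field \<Rightarrow> 'p::ab_group_add \<Rightarrow> 'p) \<Rightarrow> 'p set \<Rightarrow> 'p set \<Rightarrow> 'p set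
     \<Rightarrow> ('p \<times> 'p \<times> 'p) list \<Rightarrow> ('p \<times> 'p \<times> 'p) list \<Rightarrow> bool" where
  "tens3_eq s U V W t u \<longleftrightarrow> set t \<subseteq> U \<times> V \<times> W \<and> set u \<subseteq> U \<times> V \<times> W \<and>
    (\<forall>k l m. lin_form s U k \<and> lin_form s V l \<and> lin_form s W m \<longrightarrow>
       (\<Sum>(a,b,c)\<leftarrow>t. k a * l b * m c) = (\<Sum>(a,b,c)\<leftarrow>u. k a * l b * m c))"

text \<open>Product m A B : P[A] (x) P[B] -> P[A \<union> B] (A, B disjoint), given as a
bilinear map; unit u \<in> P[{}].\<close>

definition twisted_algebra :: "('k::field, 'l, 'p::ab_group_add) spec
    \<Rightarrow> ('l set \<Rightarrow> 'l set \<Rightarrow> 'p \<Rightarrow> 'p \<Rightarrow> 'p) \<Rightarrow> 'p \<Rightarrow> bool" where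
  "twisted_algebra P m u \<longleftrightarrow> species P \<and>
    (\<forall>A B. finite A \<and> finite B \<and> A \<inter> B = {} \<longrightarrow>
       (\<forall>x\<in>sp P A. \<forall>y\<in>sp P B. m A B x y \<in> sp P (A \<union> B)) \<and>
       (\<forall>y\<in>sp P B. lin_map (scl P) (sp P A) (scl P) (\<lambda>x. m A B x y)) \<and>
       (\<forall>x\<in>sp P A. lin_map (scl P) (sp P B) (scl P) (\<lambda>y. m A B x y)) \<and>
       (\<forall>s. \<forall>x\<in>sp P A. \<forall>y\<in>sp P B. inj_on s (A \<union> B) \<longrightarrow>
          m (s ` A) (s ` B) (rl P s A x) (rl P s B y) = rl P s (A \<union> B) (m A B x y))) \<and>
    (\<forall>A B C. finite A \<and> finite B \<and> finite C \<and> A \<inter> B = {} \<and> A \<inter> C = {} \<and> B \<inter> C = {} \<longrightarrow>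
       (\<forall>x\<in>sp P A. \<forall>y\<in>sp P B. \<forall>z\<in>sp P C.
          m (A \<union> B) C (m A B x y) z = m A (B \<union> C) x (m B C y z))) \<and>
    u \<in> sp P {} \<and>
    (\<forall>A. \<forall>x\<in>sp P A. finite A \<longrightarrow> m {} A u x = x \<and> m A {} x u = x)"

definition twisted_coalgebra :: "('k::field, 'l, 'p::ab_group_add) spec
    \<Rightarrow> ('l set \<Rightarrow> 'l set \<Rightarrow> 'p \<Rightarrow> ('p \<times> 'p) list) \<Rightarrow> ('p \<Rightarrow> 'k) \<Rightarrow> bool" where
  "twisted_coalgebra P D e \<longleftrightarrow> species P \<and>
    (\<forall>A B. finite A \<and> finite B \<and> A \<inter> B = {} \<longrightarrow>
       (\<forall>x\<in>sp P (A \<union> B). set (D A B x) \<subseteq> sp P A \<times> sp P B) \<and>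
       (\<forall>x\<in>sp P (A \<union> B). \<forall>y\<in>sp P (A \<union> B).
          tens_eq (scl P) (sp P A) (sp P B) (D A B (x + y)) (D A B x @ D A B y)) \<and>
       (\<forall>c. \<forall>x\<in>sp P (A \<union> B).
          tens_eq (scl P) (sp P A) (sp P B) (D A B (scl P c x))
            (map (\<lambda>(a,b). (scl P c a, b)) (D A B x))) \<and>
       (\<forall>s. \<forall>x\<in>sp P (A \<union> B). inj_on s (A \<union> B) \<longrightarrow>
          tens_eq (scl P) (sp P (s ` A)) (sp P (s ` B)) (D (s ` A) (s ` B) (rl P s (A \<union> B) x))
            (map (\<lambda>(a,b). (rl P s A a, rl P s B b)) (D A B x))) \<and>
       (\<forall>x\<in>sp P A. (\<Sum>(a,b)\<leftarrow>D {} A x. scl P (e a) b) = x) \<and>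
       (\<forall>x\<in>sp P A. (\<Sum>(a,b)\<leftarrow>D A {} x. scl P (e b) a) = x)) \<and>
    (\<forall>A B C. finite A \<and> finite B \<and> finite C \<and> A \<inter> B = {} \<and> A \<inter> C = {} \<and> B \<inter> C = {} \<longrightarrow>
       (\<forall>x\<in>sp P (A \<union> B \<union> C).
          tens3_eq (scl P) (sp P A) (sp P B) (sp P C)
            [(a, b, c). (v, c) \<leftarrow> D (A \<union> B) C x, (a, b) \<leftarrow> D A B v]
            [(a, b, c). (a, v) \<leftarrow> D A (B \<union> C) x, (b, c) \<leftarrow> D B C v])) \<and>
    lin_form (scl P) (sp P {}) e"

definition twisted_bialgebra :: "('k::field, 'l, 'p::ab_group_add) spec
    \<Rightarrow> ('l set \<Rightarrow> 'l set \<Rightarrow> 'p \<Rightarrow> 'p \<Rightarrow> 'p) \<Rightarrow> 'p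
    \<Rightarrow> ('l set \<Rightarrow> 'l set \<Rightarrow> 'p \<Rightarrow> ('p \<times> 'p) list) \<Rightarrow> ('p \<Rightarrow> 'k) \<Rightarrow> bool" where
  "twisted_bialgebra P m u D e \<longleftrightarrow> twisted_algebra P m u \<and> twisted_coalgebra P D e \<and>
    (\<forall>A B C E. finite A \<and> finite B \<and> finite C \<and> finite E \<and> A \<inter> B = {} \<and> C \<inter> E = {}
        \<and> A \<union> B = C \<union> E \<longrightarrow>
       (\<forall>x\<in>sp P C. \<forall>y\<in>sp P E.
          tens_eq (scl P) (sp P A) (sp P B) (D A B (m C E x y))
            [(m (A \<inter> C) (A \<inter> E) x1 y1, m (B \<inter> C) (B \<inter> E) x2 y2).
               (x1, x2) \<leftarrow> D (A \<inter> C) (B \<inter> C) x, (y1, y2) \<leftarrow> D (A \<inter> E) (B \<inter> E) y])) \<and>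
    tens_eq (scl P) (sp P {}) (sp P {}) (D {} {} u) [(u, u)] \<and>
    (\<forall>x\<in>sp P {}. \<forall>y\<in>sp P {}. e (m {} {} x y) = e x * e y) \<and>
    e u = 1"

definition double_twisted_bialgebra :: "('k::field, 'l, 'p::ab_group_add) spec
    \<Rightarrow> ('l set \<Rightarrow> 'l set \<Rightarrow> 'p \<Rightarrow> 'p \<Rightarrow> 'p) \<Rightarrow> 'p
    \<Rightarrow> ('l set \<Rightarrow> 'l set \<Rightarrow> 'p \<Rightarrow> ('p \<times> 'p) list) \<Rightarrow> ('p \<Rightarrow> 'k)
    \<Rightarrow> ('l set \<Rightarrow> 'p \<Rightarrow> ('p \<times> 'p) list) \<Rightarrow> ('l set \<Rightarrow> 'p \<Rightarrow> 'k) \<Rightarrow> bool" where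
  "double_twisted_bialgebra P m u D e d e' \<longleftrightarrow> twisted_bialgebra P m u D e \<and>
    (\<forall>A. finite A \<longrightarrow>
       (\<forall>x\<in>sp P A. set (d A x) \<subseteq> sp P A \<times> sp P A) \<and>
       (\<forall>x\<in>sp P A. \<forall>y\<in>sp P A. tens_eq (scl P) (sp P A) (sp P A) (d A (x + y)) (d A x @ d A y)) \<and>
       (\<forall>c. \<forall>x\<in>sp P A. tens_eq (scl P) (sp P A) (sp P A) (d A (scl P c x))
            (map (\<lambda>(a,b). (scl P c a, b)) (d A x))) \<and>
       (\<forall>s. \<forall>x\<in>sp P A. inj_on s A \<longrightarrow>
          tens_eq (scl P) (sp P (s ` A)) (sp P (s ` A)) (d (s ` A) (rl P s A x))
            (map (\<lambda>(a,b). (rl P s A a, rl P s A b)) (d A x))) \<and>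
       (\<forall>x\<in>sp P A. tens3_eq (scl P) (sp P A) (sp P A) (sp P A)
            [(a, b, c). (v, c) \<leftarrow> d A x, (a, b) \<leftarrow> d A v]
            [(a, b, c). (a, v) \<leftarrow> d A x, (b, c) \<leftarrow> d A v]) \<and>
       lin_form (scl P) (sp P A) (e' A) \<and>
       (\<forall>x\<in>sp P A. (\<Sum>(a,b)\<leftarrow>d A x. scl P (e' A a) b) = x) \<and>
       (\<forall>x\<in>sp P A. (\<Sum>(a,b)\<leftarrow>d A x. scl P (e' A b) a) = x)) \<and>
    (\<forall>A B. finite A \<and> finite B \<and> A \<inter> B = {} \<longrightarrow>
       (\<forall>x\<in>sp P A. \<forall>y\<in>sp P B.
          tens_eq (scl P) (sp P (A \<union> B)) (sp P (A \<union> B)) (d (A \<union> B) (m A B x y))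
            [(m A B x1 y1, m A B x2 y2). (x1, x2) \<leftarrow> d A x, (y1, y2) \<leftarrow> d B y]) \<and>
       (\<forall>x\<in>sp P (A \<union> B).
          tens3_eq (scl P) (sp P A) (sp P B) (sp P (A \<union> B))
            [(a, b, c). (v, c) \<leftarrow> d (A \<union> B) x, (a, b) \<leftarrow> D A B v]
            [(a1, b1, m A B a2 b2). (a, b) \<leftarrow> D A B x, (a1, a2) \<leftarrow> d A a, (b1, b2) \<leftarrow> d B b])) \<and>
    tens_eq (scl P) (sp P {}) (sp P {}) (d {} u) [(u, u)] \<and>
    (\<forall>x\<in>sp P {}. (\<Sum>(a,b)\<leftarrow>d {} x. scl P (e a) b) = scl P (e x) u)"

definition character :: "('k::field, 'l, 'p::ab_group_add) spec
    \<Rightarrow> ('l set \<Rightarrow> 'l set \<Rightarrow> 'p \<Rightarrow> 'p \<Rightarrow> 'p) \<Rightarrow> 'p \<Rightarrow> ('l set \<Rightarrow> 'p \<Rightarrow> 'k) \<Rightarrow> bool" where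
  "character P m u f \<longleftrightarrow>
    (\<forall>A. finite A \<longrightarrow> lin_form (scl P) (sp P A) (f A)) \<and>
    (\<forall>A s. \<forall>x\<in>sp P A. finite A \<and> inj_on s A \<longrightarrow> f (s ` A) (rl P s A x) = f A x) \<and>
    (\<forall>A B. \<forall>x\<in>sp P A. \<forall>y\<in>sp P B. finite A \<and> finite B \<and> A \<inter> B = {} \<longrightarrow>
        f (A \<union> B) (m A B x y) = f A x * f B y) \<and>
    f {} u = 1"

definition conv :: "('l set \<Rightarrow> 'p \<Rightarrow> ('p \<times> 'p) list) \<Rightarrow> ('l set \<Rightarrow> 'p \<Rightarrow> 'k::field)
    \<Rightarrow> ('l set \<Rightarrow> 'p \<Rightarrow> 'k) \<Rightarrow> 'l set \<Rightarrow> 'p \<Rightarrow> 'k" where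
  "conv d f g A x = (\<Sum>(a,b)\<leftarrow>d A x. f A a * g A b)"

definition species_mor :: "('k::field, 'l, 'p::ab_group_add) spec \<Rightarrow> ('k, 'l, 'q::ab_group_add) spec
    \<Rightarrow> ('l set \<Rightarrow> 'p \<Rightarrow> 'q) \<Rightarrow> bool" where
  "species_mor P Q phi \<longleftrightarrow>
    (\<forall>A. finite A \<longrightarrow> (\<forall>x\<in>sp P A. phi A x \<in> sp Q A) \<and> lin_map (scl P) (sp P A) (scl Q) (phi A)) \<and>
    (\<forall>A s. \<forall>x\<in>sp P A. finite A \<and> inj_on s A \<longrightarrow> phi (s ` A) (rl P s A x) = rl Q s A (phi A x))"

definition mor_eq :: "('k, 'l, 'p) spec \<Rightarrow> ('l set \<Rightarrow> 'p \<Rightarrow> 'q) \<Rightarrow> ('l set \<Rightarrow> 'p \<Rightarrow> 'q) \<Rightarrow> bool" where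
  "mor_eq P phi psi \<longleftrightarrow> (\<forall>A. finite A \<longrightarrow> (\<forall>x\<in>sp P A. phi A x = psi A x))"

definition alg_mor :: "('k::field, 'l, 'p::ab_group_add) spec
    \<Rightarrow> ('l set \<Rightarrow> 'l set \<Rightarrow> 'p \<Rightarrow> 'p \<Rightarrow> 'p) \<Rightarrow> 'p
    \<Rightarrow> ('k, 'l, 'q::ab_group_add) spec \<Rightarrow> ('l set \<Rightarrow> 'l set \<Rightarrow> 'q \<Rightarrow> 'q \<Rightarrow> 'q) \<Rightarrow> 'q
    \<Rightarrow> ('l set \<Rightarrow> 'p \<Rightarrow> 'q) \<Rightarrow> bool" where
  "alg_mor P m u Q mQ uQ phi \<longleftrightarrow> species_mor P Q phi \<and>
    (\<forall>A B. \<forall>x\<in>sp P A. \<forall>y\<in>sp P B. finite A \<and> finite B \<and> A \<inter> B = {} \<longrightarrow>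
        phi (A \<union> B) (m A B x y) = mQ A B (phi A x) (phi B y)) \<and>
    phi {} u = uQ"

definition coalg_mor :: "('k::field, 'l, 'p::ab_group_add) spec
    \<Rightarrow> ('l set \<Rightarrow> 'l set \<Rightarrow> 'p \<Rightarrow> ('p \<times> 'p) list) \<Rightarrow> ('p \<Rightarrow> 'k)
    \<Rightarrow> ('k, 'l, 'q::ab_group_add) spec \<Rightarrow> ('l set \<Rightarrow> 'l set \<Rightarrow> 'q \<Rightarrow> ('q \<times> 'q) list) \<Rightarrow> ('q \<Rightarrow> 'k)
    \<Rightarrow> ('l set \<Rightarrow> 'p \<Rightarrow> 'q) \<Rightarrow> bool" where
  "coalg_mor P D e Q DQ eQ phi \<longleftrightarrow> species_mor P Q phi \<and>
    (\<forall>A B. \<forall>x\<in>sp P (A \<union> B). finite A \<and> finite B \<and> A \<inter> B = {} \<longrightarrow>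
        tens_eq (scl Q) (sp Q A) (sp Q B) (DQ A B (phi (A \<union> B) x))
          (map (\<lambda>(a,b). (phi A a, phi B b)) (D A B x))) \<and>
    (\<forall>x\<in>sp P {}. eQ (phi {} x) = e x)"

definition bialg_mor :: "('k::field, 'l, 'p::ab_group_add) spec
    \<Rightarrow> ('l set \<Rightarrow> 'l set \<Rightarrow> 'p \<Rightarrow> 'p \<Rightarrow> 'p) \<Rightarrow> 'p
    \<Rightarrow> ('l set \<Rightarrow> 'l set \<Rightarrow> 'p \<Rightarrow> ('p \<times> 'p) list) \<Rightarrow> ('p \<Rightarrow> 'k)
    \<Rightarrow> ('k, 'l, 'q::ab_group_add) spec
    \<Rightarrow> ('l set \<Rightarrow> 'l set \<Rightarrow> 'q \<Rightarrow> 'q \<Rightarrow> 'q) \<Rightarrow> 'q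
    \<Rightarrow> ('l set \<Rightarrow> 'l set \<Rightarrow> 'q \<Rightarrow> ('q \<times> 'q) list) \<Rightarrow> ('q \<Rightarrow> 'k)
    \<Rightarrow> ('l set \<Rightarrow> 'p \<Rightarrow> 'q) \<Rightarrow> bool" where
  "bialg_mor P m u D e Q mQ uQ DQ eQ phi \<longleftrightarrow>
     alg_mor P m u Q mQ uQ phi \<and> coalg_mor P D e Q DQ eQ phi"

definition ract :: "('k, 'l, 'q) spec \<Rightarrow> ('l set \<Rightarrow> 'p \<Rightarrow> ('p \<times> 'p) list)
    \<Rightarrow> ('l set \<Rightarrow> 'p \<Rightarrow> 'q::ab_group_add) \<Rightarrow> ('l set \<Rightarrow> 'p \<Rightarrow> 'k) \<Rightarrow> 'l set \<Rightarrow> 'p \<Rightarrow> 'q" where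
  "ract Q d phi f A x = (\<Sum>(a,b)\<leftarrow>d A x. scl Q (f A b) (phi A a))"

end

theory Submission
  imports Defs
begin

definition clsd :: "('k::field \<Rightarrow> 'p::ab_group_add \<Rightarrow> 'p) \<Rightarrow> 'p set \<Rightarrow> bool" where
  "clsd s V \<longleftrightarrow> 0 \<in> V \<and> (\<forall>x\<in>V. \<forall>y\<in>V. x + y \<in> V) \<and> (\<forall>c. \<forall>x\<in>V. s c x \<in> V)"

lemma clsd_sub: "vector_space s \<Longrightarrow> module.subspace s V \<Longrightarrow> clsd s V"
  by (simp add: clsd_def module.subspace_def module_iff_vector_space)

lemma clsd_sum: "clsd s V \<Longrightarrow> (\<forall>x\<in>set xs. g x \<in> V) \<Longrightarrow> sum_list (map g xs) \<in> V"
  by (induction xs) (auto simp: clsd_def)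

lemma lin_form_zero: "lin_form s V l \<Longrightarrow> 0 \<in> V \<Longrightarrow> l 0 = 0"
  unfolding lin_form_def by (metis add.right_neutral add_left_cancel)

lemma lin_map_zero: "lin_map s V s2 f \<Longrightarrow> 0 \<in> V \<Longrightarrow> f 0 = 0"
  unfolding lin_map_def by (metis add.right_neutral add_left_cancel)

lemma lin_form_sum: "lin_form s V l \<Longrightarrow> clsd s V \<Longrightarrow> (\<forall>x\<in>set xs. g x \<in> V) \<Longrightarrow>
   l (sum_list (map g xs)) = sum_list (map (\<lambda>x. l (g x)) xs)"
proof (induction xs)
  case Nil then show ?case using lin_form_zero by (auto simp: clsd_def)
next
  case (Cons a xs)
  have "sum_list (map g xs) \<in> V" using Cons clsd_sum by auto
  then show ?case using Cons by (auto simp: lin_form_def)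
qed

lemma lin_map_sum: "lin_map s V s2 l \<Longrightarrow> clsd s V \<Longrightarrow> (\<forall>x\<in>set xs. g x \<in> V) \<Longrightarrow>
   l (sum_list (map g xs)) = sum_list (map (\<lambda>x. l (g x)) xs)"
proof (induction xs)
  case Nil then show ?case using lin_map_zero by (auto simp: clsd_def)
next
  case (Cons a xs)
  have "sum_list (map g xs) \<in> V" using Cons clsd_sum by auto
  then show ?case using Cons by (auto simp: lin_map_def)
qed

lemma lin_form_comp: "lin_form s2 W l \<Longrightarrow> lin_map s1 V s2 f \<Longrightarrow> (\<forall>x\<in>V. f x \<in> W) \<Longrightarrow>
   lin_form s1 V (\<lambda>x. l (f x))"
  unfolding lin_form_def lin_map_def by auto

lemma lin_form_mono: "lin_form s W l \<Longrightarrow> V \<subseteq> W \<Longrightarrow> lin_form s V l"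
  unfolding lin_form_def by blast

lemma tens_eqD: "tens_eq s V W t u \<Longrightarrow> lin_form s V l \<Longrightarrow> lin_form s W m \<Longrightarrow>
   (\<Sum>(a,b)\<leftarrow>t. l a * m b) = (\<Sum>(a,b)\<leftarrow>u. l a * m b)"
  unfolding tens_eq_def by blast

lemma tens3_eqD: "tens3_eq s U V W t u \<Longrightarrow> lin_form s U k \<Longrightarrow> lin_form s V l \<Longrightarrow> lin_form s W m \<Longrightarrow>
   (\<Sum>(a,b,c)\<leftarrow>t. k a * l b * m c) = (\<Sum>(a,b,c)\<leftarrow>u. k a * l b * m c)"
  unfolding tens3_eq_def by blast

lemma vs_self: "vector_space ((*) :: 'k::field \<Rightarrow> 'k \<Rightarrow> 'k)"
  by unfold_locales (auto simp: algebra_simps)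

lemma separate:
  fixes s :: "'k::field \<Rightarrow> 'q::ab_group_add \<Rightarrow> 'q"
  assumes vs: "vector_space s" and h: "\<And>\<psi>. lin_form s UNIV \<psi> \<Longrightarrow> \<psi> x = \<psi> y"
  shows "x = y"
proof (rule ccontr)
  assume ne: "x \<noteq> y"
  interpret vector_space_pair s "(*) :: 'k \<Rightarrow> 'k \<Rightarrow> 'k"
    using vs vs_self by (simp add: vector_space_pair_def)
  have "vs1.independent {x - y}" using ne by simp
  then obtain g where g: "Vector_Spaces.linear s (*) g" "g (x - y) = 1"
    using linear_independent_extend[of "{x - y}" "\<lambda>_. 1"] by auto
  have lf: "lin_form s UNIV g" using g(1) unfolding Vector_Spaces.linear_iff lin_form_def by auto
  have "g (x - y) = g x - g y" using linear_diff[OF g(1)] .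
  then show False using h[OF lf] g(2) by simp
qed

lemma sum_list_cong': "(\<And>x. x \<in> set xs \<Longrightarrow> g x = h x) \<Longrightarrow> sum_list (map g xs) = sum_list (map h xs)"
  by (metis map_cong)

lemma Q_vs: "species Q \<Longrightarrow> vector_space (scl Q)"
  unfolding species_def by (elim conjE)
lemma Q_cl: assumes "species Q" "finite A" shows "clsd (scl Q) (sp Q A)"
proof -
  have "module.subspace (scl Q) (sp Q A)" using assms unfolding species_def by simp
  then show ?thesis using clsd_sub Q_vs assms by blast
qed

context
  fixes P :: "('k::field, 'l, 'p::ab_group_add) spec"
    and m :: "'l set \<Rightarrow> 'l set \<Rightarrow> 'p \<Rightarrow> 'p \<Rightarrow> 'p" and u :: 'p
    and D :: "'l set \<Rightarrow> 'l set \<Rightarrow> 'p \<Rightarrow> ('p \<times> 'p) list" and e :: "'p \<Rightarrow> 'k"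
    and d :: "'l set \<Rightarrow> 'p \<Rightarrow> ('p \<times> 'p) list" and e' :: "'l set \<Rightarrow> 'p \<Rightarrow> 'k"
  assumes dtb: "double_twisted_bialgebra P m u D e d e'"
begin

lemma dtb_tb: "twisted_bialgebra P m u D e"
  using dtb unfolding double_twisted_bialgebra_def by simp
lemma dtb_ta: "twisted_algebra P m u"
  using dtb_tb unfolding twisted_bialgebra_def by blast
lemma dtb_tc: "twisted_coalgebra P D e"
  using dtb_tb unfolding twisted_bialgebra_def by blast
lemma dtb_sp: "species P"
  using dtb_ta unfolding twisted_algebra_def by simp
lemma P_vs: "vector_space (scl P)"
  using dtb_sp Q_vs by blast
lemma P_cl: "finite A \<Longrightarrow> clsd (scl P) (sp P A)"
  using dtb_sp Q_cl by blast
lemma u_in: "u \<in> sp P {}"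
  using dtb_ta unfolding twisted_algebra_def by simp
lemma m_in: "finite A \<Longrightarrow> finite B \<Longrightarrow> A \<inter> B = {} \<Longrightarrow> x \<in> sp P A \<Longrightarrow> y \<in> sp P B \<Longrightarrow> m A B x y \<in> sp P (A \<union> B)"
  using dtb_ta unfolding twisted_algebra_def by simp
lemma D_set: "finite A \<Longrightarrow> finite B \<Longrightarrow> A \<inter> B = {} \<Longrightarrow> x \<in> sp P (A \<union> B) \<Longrightarrow> set (D A B x) \<subseteq> sp P A \<times> sp P B"
  using dtb_tc unfolding twisted_coalgebra_def by simp
lemma d_set: "finite A \<Longrightarrow> x \<in> sp P A \<Longrightarrow> set (d A x) \<subseteq> sp P A \<times> sp P A"
  using dtb unfolding double_twisted_bialgebra_def by simp
lemma d_add: "finite A \<Longrightarrow> x \<in> sp P A \<Longrightarrow> y \<in> sp P A \<Longrightarrow> tens_eq (scl P) (sp P A) (sp P A) (d A (x + y)) (d A x @ d A y)"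
  using dtb unfolding double_twisted_bialgebra_def by simp
lemma d_scl: "finite A \<Longrightarrow> x \<in> sp P A \<Longrightarrow> tens_eq (scl P) (sp P A) (sp P A) (d A (scl P c x))
            (map (\<lambda>(a,b). (scl P c a, b)) (d A x))"
  using dtb unfolding double_twisted_bialgebra_def by simp
lemma d_rl: "finite A \<Longrightarrow> x \<in> sp P A \<Longrightarrow> inj_on s A \<Longrightarrow>
          tens_eq (scl P) (sp P (s ` A)) (sp P (s ` A)) (d (s ` A) (rl P s A x))
            (map (\<lambda>(a,b). (rl P s A a, rl P s A b)) (d A x))"
  using dtb unfolding double_twisted_bialgebra_def by simp
lemma d_coass: "finite A \<Longrightarrow> x \<in> sp P A \<Longrightarrow> tens3_eq (scl P) (sp P A) (sp P A) (sp P A)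
            [(a, b, c). (v, c) \<leftarrow> d A x, (a, b) \<leftarrow> d A v]
            [(a, b, c). (a, v) \<leftarrow> d A x, (b, c) \<leftarrow> d A v]"
  using dtb unfolding double_twisted_bialgebra_def by simp
lemma e'_lin: "finite A \<Longrightarrow> lin_form (scl P) (sp P A) (e' A)"
  using dtb unfolding double_twisted_bialgebra_def by simp
lemma d_counit: "finite A \<Longrightarrow> x \<in> sp P A \<Longrightarrow> (\<Sum>(a,b)\<leftarrow>d A x. scl P (e' A b) a) = x"
  using dtb unfolding double_twisted_bialgebra_def by simp
lemma d_mult: "finite A \<Longrightarrow> finite B \<Longrightarrow> A \<inter> B = {} \<Longrightarrow> x \<in> sp P A \<Longrightarrow> y \<in> sp P B \<Longrightarrow>
          tens_eq (scl P) (sp P (A \<union> B)) (sp P (A \<union> B)) (d (A \<union> B) (m A B x y))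
            [(m A B x1 y1, m A B x2 y2). (x1, x2) \<leftarrow> d A x, (y1, y2) \<leftarrow> d B y]"
  using dtb unfolding double_twisted_bialgebra_def by simp
lemma d_compat: "finite A \<Longrightarrow> finite B \<Longrightarrow> A \<inter> B = {} \<Longrightarrow> x \<in> sp P (A \<union> B) \<Longrightarrow>
          tens3_eq (scl P) (sp P A) (sp P B) (sp P (A \<union> B))
            [(a, b, c). (v, c) \<leftarrow> d (A \<union> B) x, (a, b) \<leftarrow> D A B v]
            [(a1, b1, m A B a2 b2). (a, b) \<leftarrow> D A B x, (a1, a2) \<leftarrow> d A a, (b1, b2) \<leftarrow> d B b]"
  using dtb unfolding double_twisted_bialgebra_def by simp
lemma d_unit: "tens_eq (scl P) (sp P {}) (sp P {}) (d {} u) [(u, u)]"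
  using dtb unfolding double_twisted_bialgebra_def by simp
lemma d_e: "x \<in> sp P {} \<Longrightarrow> (\<Sum>(a,b)\<leftarrow>d {} x. scl P (e a) b) = scl P (e x) u"
  using dtb unfolding double_twisted_bialgebra_def by simp

end

lemma rl_in: "species Q \<Longrightarrow> finite A \<Longrightarrow> inj_on s A \<Longrightarrow> x \<in> sp Q A \<Longrightarrow> rl Q s A x \<in> sp Q (s ` A)"
  unfolding species_def by simp
lemma rl_lin: "species Q \<Longrightarrow> finite A \<Longrightarrow> inj_on s A \<Longrightarrow> lin_map (scl Q) (sp Q A) (scl Q) (rl Q s A)"
  unfolding species_def by simp

lemma psi_ract: "lin_form (scl Q) UNIV \<psi> \<Longrightarrow>
   \<psi> (ract Q d phi f A x) = (\<Sum>(a,b)\<leftarrow>d A x. \<psi> (phi A a) * f A b)"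
  unfolding ract_def
  apply (subst lin_form_sum[where V=UNIV])
     apply (auto simp: clsd_def lin_form_def intro!: sum_list_cong' split: prod.splits)
  done

lemma phi_in: "species_mor P Q phi \<Longrightarrow> finite A \<Longrightarrow> x \<in> sp P A \<Longrightarrow> phi A x \<in> sp Q A"
  unfolding species_mor_def by simp
lemma phi_lin: "species_mor P Q phi \<Longrightarrow> finite A \<Longrightarrow> lin_map (scl P) (sp P A) (scl Q) (phi A)"
  unfolding species_mor_def by simp
lemma phi_nat: "species_mor P Q phi \<Longrightarrow> finite A \<Longrightarrow> inj_on s A \<Longrightarrow> x \<in> sp P A \<Longrightarrow>
    phi (s ` A) (rl P s A x) = rl Q s A (phi A x)"
  unfolding species_mor_def by simp
lemma psi_phi: "lin_form (scl Q) UNIV \<psi> \<Longrightarrow> species_mor P Q phi \<Longrightarrow> finite A \<Longrightarrow>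
    lin_form (scl P) (sp P A) (\<lambda>x. \<psi> (phi A x))"
  using lin_form_comp[of "scl Q" UNIV \<psi> "scl P" "sp P A" "phi A"] phi_lin by blast
lemma char_lin: "character P m u f \<Longrightarrow> finite A \<Longrightarrow> lin_form (scl P) (sp P A) (f A)"
  unfolding character_def by simp
lemma char_nat: "character P m u f \<Longrightarrow> finite A \<Longrightarrow> inj_on s A \<Longrightarrow> x \<in> sp P A \<Longrightarrow>
    f (s ` A) (rl P s A x) = f A x"
  unfolding character_def by simp
lemma char_mult: "character P m u f \<Longrightarrow> finite A \<Longrightarrow> finite B \<Longrightarrow> A \<inter> B = {} \<Longrightarrow>
   x \<in> sp P A \<Longrightarrow> y \<in> sp P B \<Longrightarrow> f (A \<union> B) (m A B x y) = f A x * f B y"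
  unfolding character_def by simp
lemma char_unit: "character P m u f \<Longrightarrow> f {} u = 1"
  unfolding character_def by simp

lemma lf_add: "lin_form s UNIV \<psi> \<Longrightarrow> \<psi> (x + y) = \<psi> x + \<psi> y"
  unfolding lin_form_def by simp
lemma lf_scl: "lin_form s UNIV \<psi> \<Longrightarrow> \<psi> (s c x) = c * \<psi> x"
  unfolding lin_form_def by simp

lemma psi_sum_scl: "lin_form s UNIV \<psi> \<Longrightarrow>
   \<psi> (\<Sum>(a,b)\<leftarrow>t. s (g a b) (h a b)) = (\<Sum>(a,b)\<leftarrow>t. \<psi> (h a b) * g a b)"
  apply (subst lin_form_sum[where V=UNIV])
     apply (auto simp: clsd_def lin_form_def intro!: sum_list_cong' split: prod.splits)
  done

context
  fixes P :: "('k::field, 'l, 'p::ab_group_add) spec"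
    and m :: "'l set \<Rightarrow> 'l set \<Rightarrow> 'p \<Rightarrow> 'p \<Rightarrow> 'p" and u :: 'p
    and D :: "'l set \<Rightarrow> 'l set \<Rightarrow> 'p \<Rightarrow> ('p \<times> 'p) list" and e :: "'p \<Rightarrow> 'k"
    and d :: "'l set \<Rightarrow> 'p \<Rightarrow> ('p \<times> 'p) list" and e' :: "'l set \<Rightarrow> 'p \<Rightarrow> 'k"
    and Q :: "('k, 'l, 'q::ab_group_add) spec"
    and phi :: "'l set \<Rightarrow> 'p \<Rightarrow> 'q"
  assumes dtb: "double_twisted_bialgebra P m u D e d e'"
    and Q: "species Q" and phi: "species_mor P Q phi"
begin

lemma ract_in: assumes A: "finite A" and x: "x \<in> sp P A"
  shows "ract Q d phi f A x \<in> sp Q A"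
proof -
  have "\<forall>y\<in>set (d A x). (case y of (a,b) \<Rightarrow> scl Q (f A b) (phi A a)) \<in> sp Q A"
  proof
    fix y assume "y \<in> set (d A x)"
    then obtain a b where y: "y = (a,b)" "a \<in> sp P A" using d_set[OF dtb A x] by auto
    have "phi A a \<in> sp Q A" using phi_in[OF phi A y(2)] .
    then show "(case y of (a,b) \<Rightarrow> scl Q (f A b) (phi A a)) \<in> sp Q A"
      using Q_cl[OF Q A] y(1) unfolding clsd_def by auto
  qed
  then show ?thesis unfolding ract_def by (rule clsd_sum[OF Q_cl[OF Q A]])
qed

lemma ract_add: assumes A: "finite A" and x: "x \<in> sp P A" and y: "y \<in> sp P A"
  and fA: "lin_form (scl P) (sp P A) (f A)"
  shows "ract Q d phi f A (x + y) = ract Q d phi f A x + ract Q d phi f A y"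
proof (rule separate[OF Q_vs[OF Q]])
  fix \<psi> assume \<psi>: "lin_form (scl Q) UNIV \<psi>"
  have l: "lin_form (scl P) (sp P A) (\<lambda>x. \<psi> (phi A x))" by (rule psi_phi[OF \<psi> phi A])
  have "\<psi> (ract Q d phi f A (x + y)) = (\<Sum>(a,b)\<leftarrow>d A (x + y). \<psi> (phi A a) * f A b)"
    by (rule psi_ract[OF \<psi>])
  also have "\<dots> = (\<Sum>(a,b)\<leftarrow>d A x @ d A y. \<psi> (phi A a) * f A b)"
    by (rule tens_eqD[OF d_add[OF dtb A x y] l fA])
  also have "\<dots> = \<psi> (ract Q d phi f A x) + \<psi> (ract Q d phi f A y)"
    by (simp add: psi_ract[OF \<psi>])
  also have "\<dots> = \<psi> (ract Q d phi f A x + ract Q d phi f A y)"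
    using lf_add[OF \<psi>] by simp
  finally show "\<psi> (ract Q d phi f A (x + y)) = \<psi> (ract Q d phi f A x + ract Q d phi f A y)" .
qed

lemma ract_scl: assumes A: "finite A" and x: "x \<in> sp P A"
  and fA: "lin_form (scl P) (sp P A) (f A)"
  shows "ract Q d phi f A (scl P c x) = scl Q c (ract Q d phi f A x)"
proof (rule separate[OF Q_vs[OF Q]])
  fix \<psi> assume \<psi>: "lin_form (scl Q) UNIV \<psi>"
  have l: "lin_form (scl P) (sp P A) (\<lambda>x. \<psi> (phi A x))" by (rule psi_phi[OF \<psi> phi A])
  have "\<psi> (ract Q d phi f A (scl P c x)) = (\<Sum>(a,b)\<leftarrow>d A (scl P c x). \<psi> (phi A a) * f A b)"
    by (rule psi_ract[OF \<psi>])
  also have "\<dots> = (\<Sum>(a,b)\<leftarrow>map (\<lambda>(a,b). (scl P c a, b)) (d A x). \<psi> (phi A a) * f A b)"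
    by (rule tens_eqD[OF d_scl[OF dtb A x] l fA])
  also have "\<dots> = (\<Sum>(a,b)\<leftarrow>d A x. c * (\<psi> (phi A a) * f A b))"
    unfolding map_map
  proof (rule sum_list_cong')
    fix y assume "y \<in> set (d A x)"
    then obtain a b where y: "y = (a,b)" "a \<in> sp P A" using d_set[OF dtb A x] by auto
    show "((\<lambda>(a, b). \<psi> (phi A a) * f A b) \<circ> (\<lambda>(a, b). (scl P c a, b))) y =
         (case y of (a, b) \<Rightarrow> c * (\<psi> (phi A a) * f A b))"
      using l y unfolding lin_form_def by simp
  qed
  also have "\<dots> = c * (\<Sum>(a,b)\<leftarrow>d A x. \<psi> (phi A a) * f A b)"
    by (simp add: sum_list_const_mult split_def)
  also have "\<dots> = \<psi> (scl Q c (ract Q d phi f A x))"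
    by (simp add: psi_ract[OF \<psi>] lf_scl[OF \<psi>])
  finally show "\<psi> (ract Q d phi f A (scl P c x)) = \<psi> (scl Q c (ract Q d phi f A x))" .
qed

lemma ract_nat: assumes A: "finite A" and x: "x \<in> sp P A" and s: "inj_on s A"
  and f: "character P m u f"
  shows "ract Q d phi f (s ` A) (rl P s A x) = rl Q s A (ract Q d phi f A x)"
proof (rule separate[OF Q_vs[OF Q]])
  fix \<psi> assume \<psi>: "lin_form (scl Q) UNIV \<psi>"
  have sA: "finite (s ` A)" using A by simp
  have l: "lin_form (scl P) (sp P (s ` A)) (\<lambda>x. \<psi> (phi (s ` A) x))" by (rule psi_phi[OF \<psi> phi sA])
  have rlx: "rl Q s A (ract Q d phi f A x) = (\<Sum>(a,b)\<leftarrow>d A x. scl Q (f A b) (rl Q s A (phi A a)))"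
    unfolding ract_def
  proof (subst lin_map_sum[OF rl_lin[OF Q A s] Q_cl[OF Q A]])
    show "\<forall>y\<in>set (d A x). (case y of (a, b) \<Rightarrow> scl Q (f A b) (phi A a)) \<in> sp Q A"
      using d_set[OF dtb A x] phi_in[OF phi A] Q_cl[OF Q A] unfolding clsd_def by auto
    show "(\<Sum>y\<leftarrow>d A x. rl Q s A (case y of (a, b) \<Rightarrow> scl Q (f A b) (phi A a))) =
      (\<Sum>(a, b)\<leftarrow>d A x. scl Q (f A b) (rl Q s A (phi A a)))"
    proof (rule sum_list_cong')
      fix y assume "y \<in> set (d A x)"
      then obtain a b where y: "y = (a,b)" "a \<in> sp P A" using d_set[OF dtb A x] by auto
      show "rl Q s A (case y of (a, b) \<Rightarrow> scl Q (f A b) (phi A a)) =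
         (case y of (a, b) \<Rightarrow> scl Q (f A b) (rl Q s A (phi A a)))"
        using rl_lin[OF Q A s] phi_in[OF phi A y(2)] y unfolding lin_map_def by simp
    qed
  qed
  have "\<psi> (ract Q d phi f (s ` A) (rl P s A x)) = (\<Sum>(a,b)\<leftarrow>d (s ` A) (rl P s A x). \<psi> (phi (s ` A) a) * f (s ` A) b)"
    by (rule psi_ract[OF \<psi>])
  also have "\<dots> = (\<Sum>(a,b)\<leftarrow>map (\<lambda>(a,b). (rl P s A a, rl P s A b)) (d A x). \<psi> (phi (s ` A) a) * f (s ` A) b)"
    by (rule tens_eqD[OF d_rl[OF dtb A x s] l char_lin[OF f sA]])
  also have "\<dots> = (\<Sum>(a,b)\<leftarrow>d A x. \<psi> (rl Q s A (phi A a)) * f A b)"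
    unfolding map_map
  proof (rule sum_list_cong')
    fix y assume "y \<in> set (d A x)"
    then obtain a b where y: "y = (a,b)" "a \<in> sp P A" "b \<in> sp P A" using d_set[OF dtb A x] by auto
    show "((\<lambda>(a, b). \<psi> (phi (s ` A) a) * f (s ` A) b) \<circ> (\<lambda>(a, b). (rl P s A a, rl P s A b))) y =
         (case y of (a, b) \<Rightarrow> \<psi> (rl Q s A (phi A a)) * f A b)"
      using y phi_nat[OF phi A s] char_nat[OF f A s] by simp
  qed
  also have "\<dots> = \<psi> (rl Q s A (ract Q d phi f A x))"
    unfolding rlx psi_sum_scl[OF \<psi>] ..
  finally show "\<psi> (ract Q d phi f (s ` A) (rl P s A x)) = \<psi> (rl Q s A (ract Q d phi f A x))" .
qed

lemma part1: assumes f: "character P m u f"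
  shows "species_mor P Q (ract Q d phi f)"
proof -
  have a: "\<And>A x y. finite A \<Longrightarrow> x\<in>sp P A \<Longrightarrow> y\<in>sp P A \<Longrightarrow>
     ract Q d phi f A (x + y) = ract Q d phi f A x + ract Q d phi f A y"
    using ract_add char_lin[OF f] by blast
  have b: "\<And>A x c. finite A \<Longrightarrow> x\<in>sp P A \<Longrightarrow>
     ract Q d phi f A (scl P c x) = scl Q c (ract Q d phi f A x)"
    using ract_scl char_lin[OF f] by blast
  have c: "\<And>A x s. finite A \<Longrightarrow> x\<in>sp P A \<Longrightarrow> inj_on s A \<Longrightarrow>
     ract Q d phi f (s ` A) (rl P s A x) = rl Q s A (ract Q d phi f A x)"
    using ract_nat f by blast
  show ?thesis unfolding species_mor_def lin_map_def using ract_in a b c by simp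
qed

lemma part2: "mor_eq P (ract Q d phi e') phi"
  unfolding mor_eq_def
proof (intro allI impI ballI)
  fix A x assume A: "finite A" and x: "x \<in> sp P A"
  have "ract Q d phi e' A x = (\<Sum>y\<leftarrow>d A x. phi A (case y of (a,b) \<Rightarrow> scl P (e' A b) a))"
    unfolding ract_def
  proof (rule sum_list_cong')
    fix y assume "y \<in> set (d A x)"
    then obtain a b where y: "y = (a,b)" "a \<in> sp P A" using d_set[OF dtb A x] by auto
    show "(case y of (a, b) \<Rightarrow> scl Q (e' A b) (phi A a)) = phi A (case y of (a, b) \<Rightarrow> scl P (e' A b) a)"
      using y phi_lin[OF phi A] unfolding lin_map_def by simp
  qed
  also have "\<dots> = phi A (\<Sum>(a,b)\<leftarrow>d A x. scl P (e' A b) a)"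
    by (rule lin_map_sum[OF phi_lin[OF phi A] P_cl[OF dtb A], symmetric])
       (use d_set[OF dtb A x] P_cl[OF dtb A] in \<open>auto simp: clsd_def\<close>)
  also have "\<dots> = phi A x" using d_counit[OF dtb A x] by simp
  finally show "ract Q d phi e' A x = phi A x" .
qed

end

lemma sum_list_concat': "sum_list (concat xss) = sum_list (map sum_list (xss :: 'a::monoid_add list list))"
  by (induction xss) auto

lemma sum_t1: "(\<Sum>(a,b,c)\<leftarrow>[(a, b, c). (v, c) \<leftarrow> L, (a, b) \<leftarrow> M v]. F a b c) =
   (\<Sum>(v,c)\<leftarrow>L. \<Sum>(a,b)\<leftarrow>M v. F a b c)"
  by (simp add: split_def o_def map_concat sum_list_concat' map_map)

lemma sum_t2: "(\<Sum>(a,b,c)\<leftarrow>[(a, b, c). (a, v) \<leftarrow> L, (b, c) \<leftarrow> M v]. F a b c) =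
   (\<Sum>(a,v)\<leftarrow>L. \<Sum>(b,c)\<leftarrow>M v. F a b c)"
  by (simp add: split_def o_def map_concat sum_list_concat' map_map)

lemma sum_t3: "(\<Sum>(a,b,c)\<leftarrow>[(a1, b1, mm a2 b2). (a, b) \<leftarrow> L, (a1, a2) \<leftarrow> M a, (b1, b2) \<leftarrow> N b]. F a b c) =
   (\<Sum>(a,b)\<leftarrow>L. \<Sum>(a1,a2)\<leftarrow>M a. \<Sum>(b1,b2)\<leftarrow>N b. F a1 b1 (mm a2 b2))"
  by (simp add: split_def o_def map_concat sum_list_concat' map_map)

lemma sum_t4: "(\<Sum>(a,b)\<leftarrow>[(mm x1 y1, mm x2 y2). (x1, x2) \<leftarrow> L, (y1, y2) \<leftarrow> M]. G a b) =
   (\<Sum>(x1,x2)\<leftarrow>L. \<Sum>(y1,y2)\<leftarrow>M. G (mm x1 y1) (mm x2 y2))"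
  by (simp add: split_def o_def map_concat sum_list_concat' map_map)

context
  fixes P :: "('k::field, 'l, 'p::ab_group_add) spec"
    and m :: "'l set \<Rightarrow> 'l set \<Rightarrow> 'p \<Rightarrow> 'p \<Rightarrow> 'p" and u :: 'p
    and D :: "'l set \<Rightarrow> 'l set \<Rightarrow> 'p \<Rightarrow> ('p \<times> 'p) list" and e :: "'p \<Rightarrow> 'k"
    and d :: "'l set \<Rightarrow> 'p \<Rightarrow> ('p \<times> 'p) list" and e' :: "'l set \<Rightarrow> 'p \<Rightarrow> 'k"
    and Q :: "('k, 'l, 'q::ab_group_add) spec"
    and phi :: "'l set \<Rightarrow> 'p \<Rightarrow> 'q"
  assumes dtb: "double_twisted_bialgebra P m u D e d e'"
    and Q: "species Q" and phi: "species_mor P Q phi"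
begin

lemma part3: assumes f: "character P m u f" and g: "character P m u g"
  shows "mor_eq P (ract Q d (ract Q d phi f) g) (ract Q d phi (conv d f g))"
  unfolding mor_eq_def
proof (intro allI impI ballI)
  fix A x assume A: "finite A" and x: "x \<in> sp P A"
  show "ract Q d (ract Q d phi f) g A x = ract Q d phi (conv d f g) A x"
  proof (rule separate[OF Q_vs[OF Q]])
    fix \<psi> assume \<psi>: "lin_form (scl Q) UNIV \<psi>"
    have l: "lin_form (scl P) (sp P A) (\<lambda>x. \<psi> (phi A x))" by (rule psi_phi[OF \<psi> phi A])
    have "\<psi> (ract Q d (ract Q d phi f) g A x) = (\<Sum>(v,c)\<leftarrow>d A x. \<psi> (ract Q d phi f A v) * g A c)"
      by (rule psi_ract[OF \<psi>])
    also have "\<dots> = (\<Sum>(v,c)\<leftarrow>d A x. \<Sum>(a,b)\<leftarrow>d A v. \<psi> (phi A a) * f A b * g A c)"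
      by (simp add: psi_ract[OF \<psi>] sum_list_mult_const split_def)
    also have "\<dots> = (\<Sum>(a,b,c)\<leftarrow>[(a, b, c). (v, c) \<leftarrow> d A x, (a, b) \<leftarrow> d A v]. \<psi> (phi A a) * f A b * g A c)"
      by (rule sum_t1[symmetric])
    also have "\<dots> = (\<Sum>(a,b,c)\<leftarrow>[(a, b, c). (a, v) \<leftarrow> d A x, (b, c) \<leftarrow> d A v]. \<psi> (phi A a) * f A b * g A c)"
      by (rule tens3_eqD[OF d_coass[OF dtb A x] l char_lin[OF f A] char_lin[OF g A]])
    also have "\<dots> = (\<Sum>(a,v)\<leftarrow>d A x. \<Sum>(b,c)\<leftarrow>d A v. \<psi> (phi A a) * f A b * g A c)"
      by (rule sum_t2)
    also have "\<dots> = (\<Sum>(a,v)\<leftarrow>d A x. \<psi> (phi A a) * conv d f g A v)"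
      by (simp add: conv_def sum_list_const_mult split_def mult.assoc)
    also have "\<dots> = \<psi> (ract Q d phi (conv d f g) A x)"
      by (rule psi_ract[OF \<psi>, symmetric])
    finally show "\<psi> (ract Q d (ract Q d phi f) g A x) = \<psi> (ract Q d phi (conv d f g) A x)" .
  qed
qed

end

lemma mQ_in: "twisted_algebra Q mQ uQ \<Longrightarrow> finite A \<Longrightarrow> finite B \<Longrightarrow> A \<inter> B = {} \<Longrightarrow> x \<in> sp Q A \<Longrightarrow> y \<in> sp Q B \<Longrightarrow> mQ A B x y \<in> sp Q (A \<union> B)"
  unfolding twisted_algebra_def by simp
lemma mQ_lin1: "twisted_algebra Q mQ uQ \<Longrightarrow> finite A \<Longrightarrow> finite B \<Longrightarrow> A \<inter> B = {} \<Longrightarrow> y \<in> sp Q B \<Longrightarrow>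
   lin_map (scl Q) (sp Q A) (scl Q) (\<lambda>x. mQ A B x y)"
  unfolding twisted_algebra_def by simp
lemma mQ_lin2: "twisted_algebra Q mQ uQ \<Longrightarrow> finite A \<Longrightarrow> finite B \<Longrightarrow> A \<inter> B = {} \<Longrightarrow> x \<in> sp Q A \<Longrightarrow>
   lin_map (scl Q) (sp Q B) (scl Q) (\<lambda>y. mQ A B x y)"
  unfolding twisted_algebra_def by simp
lemma ta_sp: "twisted_algebra Q mQ uQ \<Longrightarrow> species Q"
  unfolding twisted_algebra_def by simp

lemma psi_L_sum: assumes L: "lin_map s V s2 L" and V: "clsd s V" and \<psi>: "lin_form s2 UNIV \<psi>"
  and h: "\<forall>(a,b)\<in>set t. h a b \<in> V"
  shows "\<psi> (L (\<Sum>(a,b)\<leftarrow>t. s (g a b) (h a b))) = (\<Sum>(a,b)\<leftarrow>t. g a b * \<psi> (L (h a b)))"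
proof -
  have "L (\<Sum>(a,b)\<leftarrow>t. s (g a b) (h a b)) = (\<Sum>y\<leftarrow>t. L (case y of (a,b) \<Rightarrow> s (g a b) (h a b)))"
    by (rule lin_map_sum[OF L V]) (use h V in \<open>auto simp: clsd_def\<close>)
  also have "\<dots> = (\<Sum>(a,b)\<leftarrow>t. s2 (g a b) (L (h a b)))"
    by (rule sum_list_cong') (use h L in \<open>auto simp: lin_map_def\<close>)
  finally show ?thesis
    using psi_sum_scl[OF \<psi>, of "\<lambda>a b. g a b" "\<lambda>a b. L (h a b)" t]
    by (simp add: mult.commute)
qed

context
  fixes P :: "('k::field, 'l, 'p::ab_group_add) spec"
    and m :: "'l set \<Rightarrow> 'l set \<Rightarrow> 'p \<Rightarrow> 'p \<Rightarrow> 'p" and u :: 'p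
    and D :: "'l set \<Rightarrow> 'l set \<Rightarrow> 'p \<Rightarrow> ('p \<times> 'p) list" and e :: "'p \<Rightarrow> 'k"
    and d :: "'l set \<Rightarrow> 'p \<Rightarrow> ('p \<times> 'p) list" and e' :: "'l set \<Rightarrow> 'p \<Rightarrow> 'k"
    and Q :: "('k, 'l, 'q::ab_group_add) spec"
    and mQ uQ
    and phi :: "'l set \<Rightarrow> 'p \<Rightarrow> 'q"
  assumes dtb: "double_twisted_bialgebra P m u D e d e'"
    and TQ: "twisted_algebra Q mQ uQ" and phi: "alg_mor P m u Q mQ uQ phi"
begin

lemma Q: "species Q" using ta_sp[OF TQ] .
lemma phis: "species_mor P Q phi" using phi unfolding alg_mor_def by simp
lemma phim: "finite A \<Longrightarrow> finite B \<Longrightarrow> A \<inter> B = {} \<Longrightarrow> x \<in> sp P A \<Longrightarrow> y \<in> sp P B \<Longrightarrow>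
   phi (A \<union> B) (m A B x y) = mQ A B (phi A x) (phi B y)"
  using phi unfolding alg_mor_def by simp
lemma phiu: "phi {} u = uQ"
  using phi unfolding alg_mor_def by simp

lemma ract_mult: assumes f: "character P m u f" and A: "finite A" and B: "finite B" and AB: "A \<inter> B = {}"
  and x: "x \<in> sp P A" and y: "y \<in> sp P B"
  shows "ract Q d phi f (A \<union> B) (m A B x y) = mQ A B (ract Q d phi f A x) (ract Q d phi f B y)"
proof (rule separate[OF Q_vs[OF Q]])
  fix \<psi> assume \<psi>: "lin_form (scl Q) UNIV \<psi>"
  have AuB: "finite (A \<union> B)" using A B by simp
  have l: "lin_form (scl P) (sp P (A \<union> B)) (\<lambda>x. \<psi> (phi (A \<union> B) x))" by (rule psi_phi[OF \<psi> phis AuB])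
  have ry: "ract Q d phi f B y \<in> sp Q B" by (rule ract_in[OF dtb Q phis B y])
  have "\<psi> (ract Q d phi f (A \<union> B) (m A B x y)) = (\<Sum>(a,b)\<leftarrow>d (A \<union> B) (m A B x y). \<psi> (phi (A \<union> B) a) * f (A \<union> B) b)"
    by (rule psi_ract[OF \<psi>])
  also have "\<dots> = (\<Sum>(a,b)\<leftarrow>[(m A B x1 y1, m A B x2 y2). (x1, x2) \<leftarrow> d A x, (y1, y2) \<leftarrow> d B y]. \<psi> (phi (A \<union> B) a) * f (A \<union> B) b)"
    by (rule tens_eqD[OF d_mult[OF dtb A B AB x y] l char_lin[OF f AuB]])
  also have "\<dots> = (\<Sum>(x1,x2)\<leftarrow>d A x. \<Sum>(y1,y2)\<leftarrow>d B y. \<psi> (phi (A \<union> B) (m A B x1 y1)) * f (A \<union> B) (m A B x2 y2))"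
    by (rule sum_t4)
  also have "\<dots> = (\<Sum>(x1,x2)\<leftarrow>d A x. f A x2 * (\<Sum>(y1,y2)\<leftarrow>d B y. f B y2 * \<psi> (mQ A B (phi A x1) (phi B y1))))"
  proof (rule sum_list_cong')
    fix p assume "p \<in> set (d A x)"
    then obtain x1 x2 where p: "p = (x1,x2)" "x1 \<in> sp P A" "x2 \<in> sp P A" using d_set[OF dtb A x] by auto
    have "(\<Sum>(y1,y2)\<leftarrow>d B y. \<psi> (phi (A \<union> B) (m A B x1 y1)) * f (A \<union> B) (m A B x2 y2)) =
          (\<Sum>(y1,y2)\<leftarrow>d B y. f A x2 * (f B y2 * \<psi> (mQ A B (phi A x1) (phi B y1))))"
    proof (rule sum_list_cong')
      fix q assume "q \<in> set (d B y)"
      then obtain y1 y2 where q: "q = (y1,y2)" "y1 \<in> sp P B" "y2 \<in> sp P B" using d_set[OF dtb B y] by auto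
      show "(case q of (y1,y2) \<Rightarrow> \<psi> (phi (A \<union> B) (m A B x1 y1)) * f (A \<union> B) (m A B x2 y2)) =
            (case q of (y1,y2) \<Rightarrow> f A x2 * (f B y2 * \<psi> (mQ A B (phi A x1) (phi B y1))))"
        using q p phim[OF A B AB] char_mult[OF f A B AB] by (simp add: mult_ac)
    qed
    then show "(case p of (x1,x2) \<Rightarrow> \<Sum>(y1,y2)\<leftarrow>d B y. \<psi> (phi (A \<union> B) (m A B x1 y1)) * f (A \<union> B) (m A B x2 y2)) =
       (case p of (x1,x2) \<Rightarrow> f A x2 * (\<Sum>(y1,y2)\<leftarrow>d B y. f B y2 * \<psi> (mQ A B (phi A x1) (phi B y1))))"
      using p by (simp add: sum_list_const_mult split_def)
  qed
  also have "\<dots> = (\<Sum>(x1,x2)\<leftarrow>d A x. f A x2 * \<psi> (mQ A B (phi A x1) (ract Q d phi f B y)))"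
  proof (rule sum_list_cong')
    fix p assume "p \<in> set (d A x)"
    then obtain x1 x2 where p: "p = (x1,x2)" "x1 \<in> sp P A" using d_set[OF dtb A x] by auto
    have "\<psi> (mQ A B (phi A x1) (ract Q d phi f B y)) = (\<Sum>(y1,y2)\<leftarrow>d B y. f B y2 * \<psi> (mQ A B (phi A x1) (phi B y1)))"
      unfolding ract_def
      by (rule psi_L_sum[OF mQ_lin2[OF TQ A B AB phi_in[OF phis A p(2)]] Q_cl[OF Q B] \<psi>])
         (use d_set[OF dtb B y] phi_in[OF phis B] in auto)
    then show "(case p of (x1,x2) \<Rightarrow> f A x2 * (\<Sum>(y1,y2)\<leftarrow>d B y. f B y2 * \<psi> (mQ A B (phi A x1) (phi B y1)))) =
      (case p of (x1,x2) \<Rightarrow> f A x2 * \<psi> (mQ A B (phi A x1) (ract Q d phi f B y)))"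
      using p by simp
  qed
  also have "\<dots> = \<psi> (mQ A B (ract Q d phi f A x) (ract Q d phi f B y))"
    unfolding ract_def[of Q d phi f A]
    by (rule psi_L_sum[OF mQ_lin1[OF TQ A B AB ry] Q_cl[OF Q A] \<psi>, symmetric])
       (use d_set[OF dtb A x] phi_in[OF phis A] in auto)
  finally show "\<psi> (ract Q d phi f (A \<union> B) (m A B x y)) = \<psi> (mQ A B (ract Q d phi f A x) (ract Q d phi f B y))" .
qed

lemma ract_unit: assumes f: "character P m u f"
  shows "ract Q d phi f {} u = uQ"
proof (rule separate[OF Q_vs[OF Q]])
  fix \<psi> assume \<psi>: "lin_form (scl Q) UNIV \<psi>"
  have l: "lin_form (scl P) (sp P {}) (\<lambda>x. \<psi> (phi {} x))" by (rule psi_phi[OF \<psi> phis]) simp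
  have "\<psi> (ract Q d phi f {} u) = (\<Sum>(a,b)\<leftarrow>d {} u. \<psi> (phi {} a) * f {} b)"
    by (rule psi_ract[OF \<psi>])
  also have "\<dots> = (\<Sum>(a,b)\<leftarrow>[(u,u)]. \<psi> (phi {} a) * f {} b)"
    by (rule tens_eqD[OF d_unit[OF dtb] l char_lin[OF f]]) simp
  also have "\<dots> = \<psi> uQ" using phiu char_unit[OF f] by simp
  finally show "\<psi> (ract Q d phi f {} u) = \<psi> uQ" .
qed

lemma part4: assumes f: "character P m u f"
  shows "alg_mor P m u Q mQ uQ (ract Q d phi f)"
proof -
  have "\<And>A B x y. x \<in> sp P A \<Longrightarrow> y \<in> sp P B \<Longrightarrow> finite A \<and> finite B \<and> A \<inter> B = {} \<Longrightarrow>
     ract Q d phi f (A \<union> B) (m A B x y) = mQ A B (ract Q d phi f A x) (ract Q d phi f B y)"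
    using ract_mult[OF f] by blast
  then show ?thesis unfolding alg_mor_def
    using part1[OF dtb Q phis f] ract_unit[OF f] by blast
qed

end

lemma DQ_set: "twisted_coalgebra Q DQ eQ \<Longrightarrow> finite A \<Longrightarrow> finite B \<Longrightarrow> A \<inter> B = {} \<Longrightarrow> x \<in> sp Q (A \<union> B) \<Longrightarrow> set (DQ A B x) \<subseteq> sp Q A \<times> sp Q B"
  unfolding twisted_coalgebra_def by simp
lemma DQ_add: "twisted_coalgebra Q DQ eQ \<Longrightarrow> finite A \<Longrightarrow> finite B \<Longrightarrow> A \<inter> B = {} \<Longrightarrow> x \<in> sp Q (A \<union> B) \<Longrightarrow> y \<in> sp Q (A \<union> B) \<Longrightarrow>
   tens_eq (scl Q) (sp Q A) (sp Q B) (DQ A B (x + y)) (DQ A B x @ DQ A B y)"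
  unfolding twisted_coalgebra_def by simp
lemma DQ_scl: "twisted_coalgebra Q DQ eQ \<Longrightarrow> finite A \<Longrightarrow> finite B \<Longrightarrow> A \<inter> B = {} \<Longrightarrow> x \<in> sp Q (A \<union> B) \<Longrightarrow>
   tens_eq (scl Q) (sp Q A) (sp Q B) (DQ A B (scl Q c x)) (map (\<lambda>(a,b). (scl Q c a, b)) (DQ A B x))"
  unfolding twisted_coalgebra_def by simp
lemma eQ_lin: "twisted_coalgebra Q DQ eQ \<Longrightarrow> lin_form (scl Q) (sp Q {}) eQ"
  unfolding twisted_coalgebra_def by simp
lemma tc_sp: "twisted_coalgebra Q DQ eQ \<Longrightarrow> species Q"
  unfolding twisted_coalgebra_def by simp

lemma lf_ract: assumes l: "lin_form (scl Q) (sp Q A) l" and Q: "species Q" and A: "finite A"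
  and phis: "species_mor P Q phi"
  and ds: "set (d A x) \<subseteq> sp P A \<times> sp P A"
  shows "l (ract Q d phi f A x) = (\<Sum>(a,b)\<leftarrow>d A x. l (phi A a) * f A b)"
  unfolding ract_def
  apply (subst lin_form_sum[OF l Q_cl[OF Q A]])
  using ds phi_in[OF phis A] Q_cl[OF Q A] l
   apply (auto simp: clsd_def lin_form_def intro!: sum_list_cong' split: prod.splits)
  done

context
  fixes Q :: "('k::field, 'l, 'q::ab_group_add) spec" and DQ eQ A B l mm
  assumes TC: "twisted_coalgebra Q DQ eQ" and A: "finite A" and B: "finite B" and AB: "A \<inter> B = {}"
    and l: "lin_form (scl Q) (sp Q A) l" and mm: "lin_form (scl Q) (sp Q B) mm"
begin

lemma F_add: "x \<in> sp Q (A \<union> B) \<Longrightarrow> y \<in> sp Q (A \<union> B) \<Longrightarrow>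
  (\<Sum>(a,b)\<leftarrow>DQ A B (x + y). l a * mm b) = (\<Sum>(a,b)\<leftarrow>DQ A B x. l a * mm b) + (\<Sum>(a,b)\<leftarrow>DQ A B y. l a * mm b)"
  using tens_eqD[OF DQ_add[OF TC A B AB] l mm] by simp

lemma F_scl: assumes x: "x \<in> sp Q (A \<union> B)"
  shows "(\<Sum>(a,b)\<leftarrow>DQ A B (scl Q c x). l a * mm b) = c * (\<Sum>(a,b)\<leftarrow>DQ A B x. l a * mm b)"
proof -
  have "(\<Sum>(a,b)\<leftarrow>DQ A B (scl Q c x). l a * mm b) = (\<Sum>(a,b)\<leftarrow>map (\<lambda>(a,b). (scl Q c a, b)) (DQ A B x). l a * mm b)"
    by (rule tens_eqD[OF DQ_scl[OF TC A B AB x] l mm])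
  also have "\<dots> = (\<Sum>(a,b)\<leftarrow>DQ A B x. c * (l a * mm b))"
    unfolding map_map
    by (rule sum_list_cong') (use DQ_set[OF TC A B AB x] l in \<open>auto simp: lin_form_def\<close>)
  finally show ?thesis by (simp add: sum_list_const_mult split_def)
qed

lemma F_zero: "(\<Sum>(a,b)\<leftarrow>DQ A B 0. l a * mm b) = 0"
proof -
  have z: "0 \<in> sp Q (A \<union> B)" using Q_cl[OF tc_sp[OF TC]] A B unfolding clsd_def by simp
  have "(\<Sum>(a,b)\<leftarrow>DQ A B (0 + 0). l a * mm b) = (\<Sum>(a,b)\<leftarrow>DQ A B 0. l a * mm b) + (\<Sum>(a,b)\<leftarrow>DQ A B 0. l a * mm b)"
    by (rule F_add[OF z z])
  then show ?thesis by (metis add.right_neutral add_left_imp_eq)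
qed

lemma F_sum: "\<forall>(a,b)\<in>set t. h a b \<in> sp Q (A \<union> B) \<Longrightarrow>
  (\<Sum>(a,b)\<leftarrow>DQ A B (\<Sum>(a,b)\<leftarrow>t. scl Q (g a b) (h a b)). l a * mm b) =
  (\<Sum>(a,b)\<leftarrow>t. g a b * (\<Sum>(a',b')\<leftarrow>DQ A B (h a b). l a' * mm b'))"
proof (induction t)
  case Nil then show ?case using F_zero by simp
next
  case (Cons p t)
  obtain a b where p: "p = (a,b)" by (cases p)
  have cl: "clsd (scl Q) (sp Q (A \<union> B))" using Q_cl[OF tc_sp[OF TC]] A B by simp
  have h: "h a b \<in> sp Q (A \<union> B)" using Cons.prems p by simp
  have s1: "scl Q (g a b) (h a b) \<in> sp Q (A \<union> B)" using cl h unfolding clsd_def by simp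
  have s2: "(\<Sum>(a,b)\<leftarrow>t. scl Q (g a b) (h a b)) \<in> sp Q (A \<union> B)"
    by (rule clsd_sum[OF cl]) (use Cons.prems cl in \<open>auto simp: clsd_def\<close>)
  show ?case using Cons p F_add[OF s1 s2] F_scl[OF h] by simp
qed

end

context
  fixes P :: "('k::field, 'l, 'p::ab_group_add) spec"
    and m :: "'l set \<Rightarrow> 'l set \<Rightarrow> 'p \<Rightarrow> 'p \<Rightarrow> 'p" and u :: 'p
    and D :: "'l set \<Rightarrow> 'l set \<Rightarrow> 'p \<Rightarrow> ('p \<times> 'p) list" and e :: "'p \<Rightarrow> 'k"
    and d :: "'l set \<Rightarrow> 'p \<Rightarrow> ('p \<times> 'p) list" and e' :: "'l set \<Rightarrow> 'p \<Rightarrow> 'k"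
    and Q :: "('k, 'l, 'q::ab_group_add) spec"
    and DQ eQ
    and phi :: "'l set \<Rightarrow> 'p \<Rightarrow> 'q"
  assumes dtb: "double_twisted_bialgebra P m u D e d e'"
    and TC: "twisted_coalgebra Q DQ eQ" and phi: "coalg_mor P D e Q DQ eQ phi"
begin

lemma Qc: "species Q" using tc_sp[OF TC] .
lemma phisc: "species_mor P Q phi" using phi unfolding coalg_mor_def by simp
lemma phiD: "finite A \<Longrightarrow> finite B \<Longrightarrow> A \<inter> B = {} \<Longrightarrow> x \<in> sp P (A \<union> B) \<Longrightarrow>
   tens_eq (scl Q) (sp Q A) (sp Q B) (DQ A B (phi (A \<union> B) x)) (map (\<lambda>(a,b). (phi A a, phi B b)) (D A B x))"
  using phi unfolding coalg_mor_def by simp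
lemma phie: "x \<in> sp P {} \<Longrightarrow> eQ (phi {} x) = e x"
  using phi unfolding coalg_mor_def by simp

lemma ract_D: assumes f: "character P m u f" and A: "finite A" and B: "finite B" and AB: "A \<inter> B = {}"
  and x: "x \<in> sp P (A \<union> B)"
  shows "tens_eq (scl Q) (sp Q A) (sp Q B) (DQ A B (ract Q d phi f (A \<union> B) x))
          (map (\<lambda>(a,b). (ract Q d phi f A a, ract Q d phi f B b)) (D A B x))"
  unfolding tens_eq_def
proof (intro conjI allI impI)
  have AuB: "finite (A \<union> B)" using A B by simp
  have rx: "ract Q d phi f (A \<union> B) x \<in> sp Q (A \<union> B)" by (rule ract_in[OF dtb Qc phisc AuB x])
  show "set (DQ A B (ract Q d phi f (A \<union> B) x)) \<subseteq> sp Q A \<times> sp Q B"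
    by (rule DQ_set[OF TC A B AB rx])
  show "set (map (\<lambda>(a,b). (ract Q d phi f A a, ract Q d phi f B b)) (D A B x)) \<subseteq> sp Q A \<times> sp Q B"
    using D_set[OF dtb A B AB x] ract_in[OF dtb Qc phisc A] ract_in[OF dtb Qc phisc B] by auto
  fix l mm assume lm: "lin_form (scl Q) (sp Q A) l \<and> lin_form (scl Q) (sp Q B) mm"
  then have l: "lin_form (scl Q) (sp Q A) l" and mm: "lin_form (scl Q) (sp Q B) mm" by auto
  have kl: "lin_form (scl P) (sp P A) (\<lambda>x. l (phi A x))"
    by (rule lin_form_comp[OF l phi_lin[OF phisc A]]) (use phi_in[OF phisc A] in auto)
  have km: "lin_form (scl P) (sp P B) (\<lambda>x. mm (phi B x))"
    by (rule lin_form_comp[OF mm phi_lin[OF phisc B]]) (use phi_in[OF phisc B] in auto)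
  have dx: "set (d (A \<union> B) x) \<subseteq> sp P (A \<union> B) \<times> sp P (A \<union> B)" by (rule d_set[OF dtb AuB x])
  have "(\<Sum>(a,b)\<leftarrow>DQ A B (ract Q d phi f (A \<union> B) x). l a * mm b) =
     (\<Sum>(v,c)\<leftarrow>d (A \<union> B) x. f (A \<union> B) c * (\<Sum>(a',b')\<leftarrow>DQ A B (phi (A \<union> B) v). l a' * mm b'))"
    unfolding ract_def
    by (rule F_sum[OF TC A B AB l mm]) (use dx phi_in[OF phisc AuB] in auto)
  also have "\<dots> = (\<Sum>(v,c)\<leftarrow>d (A \<union> B) x. \<Sum>(a,b)\<leftarrow>D A B v. l (phi A a) * mm (phi B b) * f (A \<union> B) c)"
  proof (rule sum_list_cong')
    fix p assume "p \<in> set (d (A \<union> B) x)"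
    then obtain v c where p: "p = (v,c)" "v \<in> sp P (A \<union> B)" using dx by auto
    have "(\<Sum>(a',b')\<leftarrow>DQ A B (phi (A \<union> B) v). l a' * mm b') = (\<Sum>(a',b')\<leftarrow>map (\<lambda>(a,b). (phi A a, phi B b)) (D A B v). l a' * mm b')"
      by (rule tens_eqD[OF phiD[OF A B AB p(2)] l mm])
    moreover have "(\<Sum>(a,b)\<leftarrow>D A B v. l (phi A a) * mm (phi B b) * f (A \<union> B) c) =
       (\<Sum>(a,b)\<leftarrow>D A B v. l (phi A a) * mm (phi B b)) * f (A \<union> B) c"
      by (simp add: sum_list_mult_const split_def)
    moreover have "(\<Sum>(a,b)\<leftarrow>D A B v. l (phi A a) * mm (phi B b)) =
       (\<Sum>(a',b')\<leftarrow>map (\<lambda>(a, b). (phi A a, phi B b)) (D A B v). l a' * mm b')"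
      by (simp add: split_def o_def)
    ultimately show "(case p of (v,c) \<Rightarrow> f (A \<union> B) c * (\<Sum>(a',b')\<leftarrow>DQ A B (phi (A \<union> B) v). l a' * mm b')) =
      (case p of (v,c) \<Rightarrow> \<Sum>(a,b)\<leftarrow>D A B v. l (phi A a) * mm (phi B b) * f (A \<union> B) c)"
      using p by (simp add: mult.commute)
  qed
  also have "\<dots> = (\<Sum>(a,b,c)\<leftarrow>[(a, b, c). (v, c) \<leftarrow> d (A \<union> B) x, (a, b) \<leftarrow> D A B v]. l (phi A a) * mm (phi B b) * f (A \<union> B) c)"
    by (rule sum_t1[symmetric])
  also have "\<dots> = (\<Sum>(a,b,c)\<leftarrow>[(a1, b1, m A B a2 b2). (a, b) \<leftarrow> D A B x, (a1, a2) \<leftarrow> d A a, (b1, b2) \<leftarrow> d B b]. l (phi A a) * mm (phi B b) * f (A \<union> B) c)"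
    by (rule tens3_eqD[OF d_compat[OF dtb A B AB x] kl km char_lin[OF f AuB]])
  also have "\<dots> = (\<Sum>(a,b)\<leftarrow>D A B x. \<Sum>(a1,a2)\<leftarrow>d A a. \<Sum>(b1,b2)\<leftarrow>d B b. l (phi A a1) * mm (phi B b1) * f (A \<union> B) (m A B a2 b2))"
    by (rule sum_t3)
  also have "\<dots> = (\<Sum>(a,b)\<leftarrow>D A B x. (\<Sum>(a1,a2)\<leftarrow>d A a. l (phi A a1) * f A a2) * (\<Sum>(b1,b2)\<leftarrow>d B b. mm (phi B b1) * f B b2))"
  proof (rule sum_list_cong')
    fix p assume "p \<in> set (D A B x)"
    then obtain a b where p: "p = (a,b)" "a \<in> sp P A" "b \<in> sp P B" using D_set[OF dtb A B AB x] by auto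
    have "(\<Sum>(a1,a2)\<leftarrow>d A a. \<Sum>(b1,b2)\<leftarrow>d B b. l (phi A a1) * mm (phi B b1) * f (A \<union> B) (m A B a2 b2)) =
          (\<Sum>(a1,a2)\<leftarrow>d A a. (l (phi A a1) * f A a2) * (\<Sum>(b1,b2)\<leftarrow>d B b. mm (phi B b1) * f B b2))"
    proof (rule sum_list_cong')
      fix q assume "q \<in> set (d A a)"
      then obtain a1 a2 where q: "q = (a1,a2)" "a2 \<in> sp P A" using d_set[OF dtb A p(2)] by auto
      have "(\<Sum>(b1,b2)\<leftarrow>d B b. l (phi A a1) * mm (phi B b1) * f (A \<union> B) (m A B a2 b2)) =
            (\<Sum>(b1,b2)\<leftarrow>d B b. (l (phi A a1) * f A a2) * (mm (phi B b1) * f B b2))"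
      proof (rule sum_list_cong')
        fix r assume "r \<in> set (d B b)"
        then obtain b1 b2 where r: "r = (b1,b2)" "b2 \<in> sp P B" using d_set[OF dtb B p(3)] by auto
        show "(case r of (b1,b2) \<Rightarrow> l (phi A a1) * mm (phi B b1) * f (A \<union> B) (m A B a2 b2)) =
              (case r of (b1,b2) \<Rightarrow> (l (phi A a1) * f A a2) * (mm (phi B b1) * f B b2))"
          using r q char_mult[OF f A B AB q(2) r(2)] by (simp add: mult_ac)
      qed
      then show "(case q of (a1,a2) \<Rightarrow> \<Sum>(b1,b2)\<leftarrow>d B b. l (phi A a1) * mm (phi B b1) * f (A \<union> B) (m A B a2 b2)) =
            (case q of (a1,a2) \<Rightarrow> (l (phi A a1) * f A a2) * (\<Sum>(b1,b2)\<leftarrow>d B b. mm (phi B b1) * f B b2))"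
        using q by (simp add: sum_list_const_mult split_def)
    qed
    then show "(case p of (a,b) \<Rightarrow> \<Sum>(a1,a2)\<leftarrow>d A a. \<Sum>(b1,b2)\<leftarrow>d B b. l (phi A a1) * mm (phi B b1) * f (A \<union> B) (m A B a2 b2)) =
        (case p of (a,b) \<Rightarrow> (\<Sum>(a1,a2)\<leftarrow>d A a. l (phi A a1) * f A a2) * (\<Sum>(b1,b2)\<leftarrow>d B b. mm (phi B b1) * f B b2))"
      using p by (simp add: sum_list_mult_const split_def)
  qed
  also have "\<dots> = (\<Sum>(a,b)\<leftarrow>map (\<lambda>(a,b). (ract Q d phi f A a, ract Q d phi f B b)) (D A B x). l a * mm b)"
    unfolding map_map
  proof (rule sum_list_cong')
    fix p assume "p \<in> set (D A B x)"
    then obtain a b where p: "p = (a,b)" "a \<in> sp P A" "b \<in> sp P B" using D_set[OF dtb A B AB x] by auto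
    show "(case p of (a,b) \<Rightarrow> (\<Sum>(a1,a2)\<leftarrow>d A a. l (phi A a1) * f A a2) * (\<Sum>(b1,b2)\<leftarrow>d B b. mm (phi B b1) * f B b2)) =
      ((\<lambda>(a,b). l a * mm b) \<circ> (\<lambda>(a,b). (ract Q d phi f A a, ract Q d phi f B b))) p"
      using p lf_ract[where d=d and x=a, OF l Qc A phisc d_set[OF dtb A p(2)]] lf_ract[where d=d and x=b, OF mm Qc B phisc d_set[OF dtb B p(3)]]
      by simp
  qed
  finally show "(\<Sum>(a,b)\<leftarrow>DQ A B (ract Q d phi f (A \<union> B) x). l a * mm b) =
     (\<Sum>(a,b)\<leftarrow>map (\<lambda>(a,b). (ract Q d phi f A a, ract Q d phi f B b)) (D A B x). l a * mm b)" .
qed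

lemma ract_e: assumes f: "character P m u f" and x: "x \<in> sp P {}"
  shows "eQ (ract Q d phi f {} x) = e x"
proof -
  have dx: "set (d {} x) \<subseteq> sp P {} \<times> sp P {}" by (rule d_set[OF dtb _ x]) simp
  have fl: "lin_form (scl P) (sp P {}) (f {})" by (rule char_lin[OF f]) simp
  have cl: "clsd (scl P) (sp P {})" by (rule P_cl[OF dtb]) simp
  have "eQ (ract Q d phi f {} x) = (\<Sum>(a,b)\<leftarrow>d {} x. eQ (phi {} a) * f {} b)"
    by (rule lf_ract[where A="{}" and l=eQ and d=d and x=x, OF eQ_lin[OF TC] Qc finite.emptyI phisc dx])
  also have "\<dots> = (\<Sum>(a,b)\<leftarrow>d {} x. e a * f {} b)"
    by (rule sum_list_cong') (use dx phie in auto)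
  also have "\<dots> = f {} (\<Sum>(a,b)\<leftarrow>d {} x. scl P (e a) b)"
    by (subst lin_form_sum[OF fl cl]) (use dx cl fl in \<open>auto simp: clsd_def lin_form_def intro!: sum_list_cong'\<close>)
  also have "\<dots> = f {} (scl P (e x) u)" using d_e[OF dtb x] by simp
  also have "\<dots> = e x" using fl u_in[OF dtb] char_unit[OF f] unfolding lin_form_def by simp
  finally show ?thesis .
qed

lemma part5: assumes f: "character P m u f"
  shows "coalg_mor P D e Q DQ eQ (ract Q d phi f)"
proof -
  have "\<And>A B x. x \<in> sp P (A \<union> B) \<Longrightarrow> finite A \<and> finite B \<and> A \<inter> B = {} \<Longrightarrow>
     tens_eq (scl Q) (sp Q A) (sp Q B) (DQ A B (ract Q d phi f (A \<union> B) x))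
          (map (\<lambda>(a,b). (ract Q d phi f A a, ract Q d phi f B b)) (D A B x))"
    using ract_D[OF f] by blast
  then show ?thesis unfolding coalg_mor_def
    using part1[OF dtb Qc phisc f] ract_e[OF f] by blast
qed

end

theorem proposition26:
  fixes P :: "('k::field, 'l, 'p::ab_group_add) spec"
    and m :: "'l set \<Rightarrow> 'l set \<Rightarrow> 'p \<Rightarrow> 'p \<Rightarrow> 'p" and u :: 'p
    and D :: "'l set \<Rightarrow> 'l set \<Rightarrow> 'p \<Rightarrow> ('p \<times> 'p) list" and e :: "'p \<Rightarrow> 'k"
    and d :: "'l set \<Rightarrow> 'p \<Rightarrow> ('p \<times> 'p) list" and e' :: "'l set \<Rightarrow> 'p \<Rightarrow> 'k"
    and Q :: "('k, 'l, 'q::ab_group_add) spec"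
  assumes dtb: "double_twisted_bialgebra P m u D e d e'"
    and Q: "species Q"
  shows
    "(\<forall>phi f. species_mor P Q phi \<and> character P m u f \<longrightarrow> species_mor P Q (ract Q d phi f))
   \<and> (\<forall>phi. species_mor P Q phi \<longrightarrow> mor_eq P (ract Q d phi e') phi)
   \<and> (\<forall>phi f g. species_mor P Q phi \<and> character P m u f \<and> character P m u g \<longrightarrow>
        mor_eq P (ract Q d (ract Q d phi f) g) (ract Q d phi (conv d f g)))
   \<and> (\<forall>mQ uQ. twisted_algebra Q mQ uQ \<longrightarrow>
        (\<forall>phi f. alg_mor P m u Q mQ uQ phi \<and> character P m u f \<longrightarrow>
           alg_mor P m u Q mQ uQ (ract Q d phi f)))
   \<and> (\<forall>DQ eQ. twisted_coalgebra Q DQ eQ \<longrightarrow>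
        (\<forall>phi f. coalg_mor P D e Q DQ eQ phi \<and> character P m u f \<longrightarrow>
           coalg_mor P D e Q DQ eQ (ract Q d phi f)))
   \<and> (\<forall>mQ uQ DQ eQ. twisted_bialgebra Q mQ uQ DQ eQ \<longrightarrow>
        (\<forall>phi f. bialg_mor P m u D e Q mQ uQ DQ eQ phi \<and> character P m u f \<longrightarrow>
           bialg_mor P m u D e Q mQ uQ DQ eQ (ract Q d phi f)))"
  proof -
  have p1: "\<forall>phi f. species_mor P Q phi \<and> character P m u f \<longrightarrow> species_mor P Q (ract Q d phi f)"
    using part1[OF dtb Q] by blast
  have p2: "\<forall>phi. species_mor P Q phi \<longrightarrow> mor_eq P (ract Q d phi e') phi"
    using part2[OF dtb Q] by blast
  have p3: "\<forall>phi f g. species_mor P Q phi \<and> character P m u f \<and> character P m u g \<longrightarrow>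
        mor_eq P (ract Q d (ract Q d phi f) g) (ract Q d phi (conv d f g))"
    using part3[OF dtb Q] by blast
  have p4: "\<forall>mQ uQ. twisted_algebra Q mQ uQ \<longrightarrow>
        (\<forall>phi f. alg_mor P m u Q mQ uQ phi \<and> character P m u f \<longrightarrow>
           alg_mor P m u Q mQ uQ (ract Q d phi f))"
    using part4[OF dtb] by blast
  have p5: "\<forall>DQ eQ. twisted_coalgebra Q DQ eQ \<longrightarrow>
        (\<forall>phi f. coalg_mor P D e Q DQ eQ phi \<and> character P m u f \<longrightarrow>
           coalg_mor P D e Q DQ eQ (ract Q d phi f))"
    using part5[OF dtb] by blast
  have tb: "\<And>mQ uQ DQ eQ. twisted_bialgebra Q mQ uQ DQ eQ \<Longrightarrow> twisted_algebra Q mQ uQ \<and> twisted_coalgebra Q DQ eQ"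
    unfolding twisted_bialgebra_def by simp
  have p6: "\<forall>mQ uQ DQ eQ. twisted_bialgebra Q mQ uQ DQ eQ \<longrightarrow>
        (\<forall>phi f. bialg_mor P m u D e Q mQ uQ DQ eQ phi \<and> character P m u f \<longrightarrow>
           bialg_mor P m u D e Q mQ uQ DQ eQ (ract Q d phi f))"
    unfolding bialg_mor_def using p4 p5 tb by blast
  show ?thesis using p1 p2 p3 p4 p5 p6 by blast
qed

end
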